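(* Let $(\mathcal V,\mathcal W,\lambda)$ be a FTvN system with center $C$. Then: (a) For every $x\in\mathcal V$, $C(x)$ is a closed convex cone, and $[x]\cap C(x)=\{x\}$. (b) If $\lambda(x)=-\lambda(y)$ for some $x,y\in\mathcal V$, then $x=-y$ and $x,y\in C$. (c) $C$ is a closed linear subspace of $\mathcal V$ and $\lambda$ is linear on $C$. (d) $C=\{x\in\mathcal V:\lambda(-x)=-\lambda(x)\}$. (e) If $x$ and $-x$ commute, then $x\in C$. Consequently $C=\{x\in\mathcal V: x \text{ and } -x \text{ commute}\}$.
   Context: A Fan-Theobald-von Neumann (FTvN) system is a triple $(\mathcal V,\mathcal W,\lambda)$ where $\mathcal V,\mathcal W$ are real inner product spaces and $\lambda:\mathcal V\to\mathcal W$ is a map such that: (A1) $\|\lambda(x)\|=\|x\|$ for all $x$; (A2) $\langle x,y\rangle\le\langle\lambda(x),\lambda(y)\rangle$ for all $x,y$; (A3) for every $c\in\mathcal V$ and $q\in\lambda(\mathcal V)$ there exists $x$ with $\lambda(x)=q$ and $\langle c,x\rangle=\langle\lambda(c),\lambda(x)\rangle$. The $\lambda$-orbit of $u$ is $[u]=\{x:\lambda(x)=\lambda(u)\}$. Elements $x,y$ commute if $\langle x,y\rangle=\langle\lambda(x),\lambda(y)\rangle$. For $x\in\mathcal V$, $C(x)=\{y\in\mathcal V: y \text{ commutes with } x\}$, and the center of the system is $C=\bigcap_{x\in\mathcal V}C(x)$. *)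

theory Defs
  imports "HOL-Analysis.Analysis"
begin

definition ftvn :: "('v::real_inner \<Rightarrow> 'w::real_inner) \<Rightarrow> bool" where
  "ftvn lam \<longleftrightarrow>
     (\<forall>x. norm (lam x) = norm x) \<and>
     (\<forall>x y. inner x y \<le> inner (lam x) (lam y)) \<and>
     (\<forall>c q. q \<in> range lam \<longrightarrow> (\<exists>x. lam x = q \<and> inner c x = inner (lam c) (lam x)))"

definition orbit :: "('v::real_inner \<Rightarrow> 'w::real_inner) \<Rightarrow> 'v \<Rightarrow> 'v set" where
  "orbit lam u = {x. lam x = lam u}"

definition commute :: "('v::real_inner \<Rightarrow> 'w::real_inner) \<Rightarrow> 'v \<Rightarrow> 'v \<Rightarrow> bool" where
  "commute lam x y \<longleftrightarrow> inner x y = inner (lam x) (lam y)"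

definition commutant :: "('v::real_inner \<Rightarrow> 'w::real_inner) \<Rightarrow> 'v \<Rightarrow> 'v set" where
  "commutant lam x = {y. commute lam y x}"

definition center :: "('v::real_inner \<Rightarrow> 'w::real_inner) \<Rightarrow> 'v set" where
  "center lam = (\<Inter>x. commutant lam x)"

end

theory Submission
  imports Defs
begin

lemma E1: "inner (a - b) (a - (b::'a::real_inner)) = inner a a + inner b b - 2 * inner a b"
  by (simp add: inner_diff_left inner_diff_right inner_commute[of b a])
lemma E2: "inner (a + b) (a + (b::'a::real_inner)) = inner a a + inner b b + 2 * inner a b"
  by (simp add: inner_add_left inner_add_right inner_commute[of b a])
lemma E3: "inner (a - c *\<^sub>R b) (a - c *\<^sub>R (b::'a::real_inner)) = inner a a + c * c * inner b b - 2 * c * inner b a"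
  by (simp add: inner_diff_left inner_diff_right inner_commute[of a b] right_diff_distrib)
lemma E4: "inner (a - b - c) (a - b - (c::'a::real_inner)) = inner a a + inner b b + inner c c
     - 2 * inner b a - 2 * inner c a + 2 * inner b c"
  by (simp add: inner_diff_left inner_diff_right inner_commute[of a b] inner_commute[of a c] inner_commute[of b c])
lemma E5: "inner (u+v) (u+v) + inner u u + inner v v - 2 * inner u (u+v) - 2 * inner v (u+v) + 2 * inner u (v::'a::real_inner) = 0"
  by (simp add: inner_add_left inner_add_right inner_commute[of v u])

lemma f_sq: "ftvn lam \<Longrightarrow> inner (lam z) (lam z) = inner z z"
proof -
  assume "ftvn lam"
  hence "norm (lam z) = norm z" unfolding ftvn_def by blast
  hence "(norm (lam z))^2 = (norm z)^2" by simp
  thus ?thesis by (simp only: power2_norm_eq_inner)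
qed

lemma f_le: "ftvn lam \<Longrightarrow> inner x y \<le> inner (lam x) (lam y)"
  unfolding ftvn_def by blast

lemma f_a3: "ftvn lam \<Longrightarrow> \<exists>x'. lam x' = lam x \<and> inner c x' = inner (lam c) (lam x')"
  unfolding ftvn_def by blast

lemma zero_from_inner: "inner (d::'a::real_inner) d \<le> 0 \<Longrightarrow> d = 0"
  using inner_ge_zero[of d] by simp

lemma f_hom:
  assumes f: "ftvn lam" and c: "c \<ge> 0"
  shows "lam (c *\<^sub>R x) = c *\<^sub>R lam x"
proof -
  have A: "inner (c *\<^sub>R x) x \<le> inner (lam (c *\<^sub>R x)) (lam x)" using f_le[OF f] .
  have A2: "c * inner (c *\<^sub>R x) x \<le> c * inner (lam (c *\<^sub>R x)) (lam x)"
    using mult_left_mono[OF A c] .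
  have N1: "inner (lam (c *\<^sub>R x)) (lam (c *\<^sub>R x)) = c * c * inner x x" using f_sq[OF f, of "c *\<^sub>R x"] by simp
  have N2: "inner (lam x) (lam x) = inner x x" using f_sq[OF f] .
  let ?d = "lam (c *\<^sub>R x) - c *\<^sub>R lam x"
  have "inner ?d ?d = inner (lam (c *\<^sub>R x)) (lam (c *\<^sub>R x)) + c * c * inner (lam x) (lam x)
      - 2 * c * inner (lam x) (lam (c *\<^sub>R x))"
    by (rule E3)
  also have "\<dots> \<le> 0" using A2 N1 N2 inner_commute[of "lam x" "lam (c *\<^sub>R x)"] by simp
  finally show ?thesis using zero_from_inner by force
qed

lemma f_zero: "ftvn lam \<Longrightarrow> lam 0 = 0"
  using f_hom[of lam 0 0] by simp

lemma comm_add: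
  assumes f: "ftvn lam" and y: "commute lam y x" and z: "commute lam z x"
  shows "commute lam (y + z) x"
proof -
  obtain x' where x': "lam x' = lam x" "inner (y + z) x' = inner (lam (y + z)) (lam x')"
    using f_a3[OF f] by blast
  have "inner (lam (y + z)) (lam x) = inner y x' + inner z x'" using x' by (simp add: inner_add_left)
  also have "\<dots> \<le> inner (lam y) (lam x) + inner (lam z) (lam x)"
    using f_le[OF f, of y x'] f_le[OF f, of z x'] x'(1) by simp
  also have "\<dots> = inner (y + z) x" using y z unfolding commute_def by (simp add: inner_add_left)
  finally show ?thesis using f_le[OF f, of "y + z" x] unfolding commute_def by simp
qed

lemma comm_scale:
  assumes f: "ftvn lam" and y: "commute lam y x" and c: "c \<ge> 0"
  shows "commute lam (c *\<^sub>R y) x"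
  using y f_hom[OF f c, of y] unfolding commute_def by simp

lemma neg_sum:
  assumes f: "ftvn lam" and h: "lam x = - lam y"
  shows "x = - y"
proof -
  have "inner (x + y) (x + y) = inner x x + inner y y + 2 * inner x y"
    by (rule E2)
  also have "\<dots> \<le> inner (lam x) (lam x) + inner (lam y) (lam y) + 2 * inner (lam x) (lam y)"
    using f_sq[OF f, of x] f_sq[OF f, of y] f_le[OF f, of x y] by simp
  also have "\<dots> = 0" using h by (simp add: inner_commute)
  finally have "x + y = 0" using zero_from_inner by blast
  thus ?thesis by (simp add: eq_neg_iff_add_eq_0)
qed

lemma neg_center:
  assumes f: "ftvn lam" and h: "lam x = - lam y"
  shows "x \<in> center lam"
proof -
  have xy: "x = - y" using neg_sum[OF f h] .
  { fix z
    have "inner x z \<le> inner (lam x) (lam z)" using f_le[OF f] .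
    moreover have "inner y z \<le> inner (lam y) (lam z)" using f_le[OF f] .
    ultimately have "commute lam x z" using xy h unfolding commute_def by simp }
  thus ?thesis unfolding center_def commutant_def by blast
qed

lemma center_iff: "x \<in> center lam \<longleftrightarrow> (\<forall>z. commute lam x z)"
  unfolding center_def commutant_def by blast

lemma comm_neg:
  assumes f: "ftvn lam" and h: "commute lam x (- x)"
  shows "lam (- x) = - lam x"
proof -
  let ?d = "lam (- x) + lam x"
  have "inner ?d ?d = inner (lam (-x)) (lam (-x)) + inner (lam x) (lam x) + 2 * inner (lam (-x)) (lam x)"
    by (rule E2)
  also have "\<dots> = 0" using inner_commute[of "lam (-x)" "lam x"] h f_sq[OF f, of x] f_sq[OF f, of "-x"] unfolding commute_def by simp
  finally have "?d = 0" using zero_from_inner by (metis order_refl)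
  thus ?thesis by (simp add: eq_neg_iff_add_eq_0)
qed

lemma center_neg_iff:
  assumes f: "ftvn lam"
  shows "x \<in> center lam \<longleftrightarrow> lam (- x) = - lam x"
proof
  assume "x \<in> center lam"
  hence "commute lam x (- x)" using center_iff by blast
  thus "lam (- x) = - lam x" using comm_neg[OF f] by blast
next
  assume "lam (- x) = - lam x"
  hence "lam x = - lam (- x)" by simp
  thus "x \<in> center lam" using neg_center[OF f] by blast
qed

lemma center_lin_add:
  assumes f: "ftvn lam" and x: "x \<in> center lam" and y: "y \<in> center lam"
  shows "lam (x + y) = lam x + lam y"
proof -
  have cx: "\<And>w. inner (lam x) (lam w) = inner x w" using x unfolding center_iff commute_def by simp
  have cy: "\<And>w. inner (lam y) (lam w) = inner y w" using y unfolding center_iff commute_def by simp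
  let ?d = "lam (x + y) - lam x - lam y"
  have "inner ?d ?d = inner (lam (x+y)) (lam (x+y)) + inner (lam x) (lam x) + inner (lam y) (lam y)
     - 2 * inner (lam x) (lam (x+y)) - 2 * inner (lam y) (lam (x+y)) + 2 * inner (lam x) (lam y)"
    by (rule E4)
  also have "\<dots> = inner (x+y) (x+y) + inner x x + inner y y - 2 * inner x (x+y) - 2 * inner y (x+y) + 2 * inner x y"
    using cx cy f_sq[OF f] by simp
  also have "\<dots> = 0" by (rule E5)
  finally have "?d = 0" using zero_from_inner by (metis order_refl)
  thus ?thesis by (simp add: algebra_simps)
qed

lemma center_lin_scale:
  assumes f: "ftvn lam" and x: "x \<in> center lam"
  shows "lam (c *\<^sub>R x) = c *\<^sub>R lam x"
proof -
  have cx: "\<And>w. inner (lam x) (lam w) = inner x w" using x unfolding center_iff commute_def by simp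
  let ?d = "lam (c *\<^sub>R x) - c *\<^sub>R lam x"
  have "inner ?d ?d = inner (lam (c *\<^sub>R x)) (lam (c *\<^sub>R x)) + c * c * inner (lam x) (lam x)
      - 2 * c * inner (lam x) (lam (c *\<^sub>R x))"
    by (rule E3)
  also have "\<dots> = 0" using cx[of x] cx[of "c *\<^sub>R x"] f_sq[OF f, of x] f_sq[OF f, of "c *\<^sub>R x"] by simp
  finally have "?d = 0" using zero_from_inner by (metis order_refl)
  thus ?thesis by simp
qed

lemma lam_cont:
  assumes f: "ftvn lam"
  shows "continuous_on UNIV lam"
proof -
  have "dist (lam a) (lam b) \<le> dist a b" for a b
  proof -
    have "inner (lam a - lam b) (lam a - lam b) \<le> inner (a - b) (a - b)"
      using f_sq[OF f, of a] f_sq[OF f, of b] f_le[OF f, of a b]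
      using E1[of "lam a" "lam b"] E1[of a b] by linarith
    hence "(norm (lam a - lam b))^2 \<le> (norm (a - b))^2" by (simp only: power2_norm_eq_inner)
    thus ?thesis unfolding dist_norm by (rule power2_le_imp_le[OF _ norm_ge_zero])
  qed
  hence "1-lipschitz_on UNIV lam" by (intro lipschitz_onI) auto
  thus ?thesis by (rule lipschitz_on_continuous_on)
qed

lemma commutant_closed:
  assumes f: "ftvn lam"
  shows "closed (commutant lam x)"
proof -
  have e: "commutant lam x = {y. inner y x = inner (lam y) (lam x)}"
    unfolding commutant_def commute_def by simp
  have "continuous_on UNIV (\<lambda>y. inner (lam y) (lam x))"
    using lam_cont[OF f] by (intro continuous_intros) auto
  moreover have "continuous_on UNIV (\<lambda>y. inner y x)"
    by (intro continuous_intros)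
  ultimately show ?thesis unfolding e by (rule closed_Collect_eq[rotated])
qed

theorem proposition6p2:
  fixes lam :: "'v::real_inner \<Rightarrow> 'w::real_inner"
  assumes "ftvn lam"
  shows "(\<forall>x. closed (commutant lam x) \<and> convex (commutant lam x) \<and> cone (commutant lam x)
              \<and> orbit lam x \<inter> commutant lam x = {x})
     \<and> (\<forall>x y. lam x = - lam y \<longrightarrow> x = - y \<and> x \<in> center lam \<and> y \<in> center lam)
     \<and> (closed (center lam) \<and> subspace (center lam)
        \<and> (\<forall>x\<in>center lam. \<forall>y\<in>center lam. \<forall>a b::real.
              lam (a *\<^sub>R x + b *\<^sub>R y) = a *\<^sub>R lam x + b *\<^sub>R lam y))
     \<and> center lam = {x. lam (- x) = - lam x}
     \<and> (\<forall>x. commute lam x (- x) \<longrightarrow> x \<in> center lam)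
     \<and> center lam = {x. commute lam x (- x)}"
proof -
  note f = assms
  have cone_c: "cone (commutant lam x)" for x
    unfolding cone_def
  proof (intro ballI allI impI)
    fix y and c :: real assume "y \<in> commutant lam x" "0 \<le> c"
    thus "c *\<^sub>R y \<in> commutant lam x" unfolding commutant_def using comm_scale[OF f] by simp
  qed
  have conv_c: "convex (commutant lam x)" for x
    unfolding convex_def
  proof (intro ballI allI impI)
    fix y z and u v :: real assume "y \<in> commutant lam x" "z \<in> commutant lam x" "0 \<le> u" "0 \<le> v" "u + v = 1"
    thus "u *\<^sub>R y + v *\<^sub>R z \<in> commutant lam x" unfolding commutant_def
      using comm_scale[OF f] comm_add[OF f] by simp
  qed
  have orb: "orbit lam x \<inter> commutant lam x = {x}" for x
  proof
    show "{x} \<subseteq> orbit lam x \<inter> commutant lam x"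
      unfolding orbit_def commutant_def commute_def using f_sq[OF f, of x] by simp
    show "orbit lam x \<inter> commutant lam x \<subseteq> {x}"
    proof
      fix y assume "y \<in> orbit lam x \<inter> commutant lam x"
      hence l: "lam y = lam x" and c: "inner y x = inner (lam y) (lam x)"
        unfolding orbit_def commutant_def commute_def by auto
      have "inner (y - x) (y - x) = inner y y + inner x x - 2 * inner y x"
        by (rule E1)
      also have "\<dots> = 0" using l c f_sq[OF f, of x] f_sq[OF f, of y] by simp
      finally have "y - x = 0" using zero_from_inner by (metis order_refl)
      thus "y \<in> {x}" by simp
    qed
  qed
  have P2: "\<forall>x y. lam x = - lam y \<longrightarrow> x = - y \<and> x \<in> center lam \<and> y \<in> center lam"
  proof (intro allI impI conjI)
    fix x y assume h: "lam x = - lam y"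
    show "x = - y" using neg_sum[OF f h] .
    show "x \<in> center lam" using neg_center[OF f h] .
    have "lam y = - lam x" using h by simp
    thus "y \<in> center lam" using neg_center[OF f] by blast
  qed
  have cl: "closed (center lam)" unfolding center_def using commutant_closed[OF f] by blast
  have sub: "subspace (center lam)"
    unfolding subspace_def
  proof (intro conjI ballI allI)
    show "0 \<in> center lam" using center_neg_iff[OF f, of 0] f_zero[OF f] by simp
    fix x y assume x: "x \<in> center lam" and y: "y \<in> center lam"
    show "x + y \<in> center lam" unfolding center_iff using x y comm_add[OF f] center_iff by blast
  next
    fix c x assume x: "x \<in> center lam"
    show "c *\<^sub>R x \<in> center lam"
      using center_neg_iff[OF f, of "c *\<^sub>R x"] center_lin_scale[OF f x, of "- c"] center_lin_scale[OF f x, of c]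
      by simp
  qed
  have lin: "\<forall>x\<in>center lam. \<forall>y\<in>center lam. \<forall>a b::real.
              lam (a *\<^sub>R x + b *\<^sub>R y) = a *\<^sub>R lam x + b *\<^sub>R lam y"
  proof (intro ballI allI)
    fix x y a b assume x: "x \<in> center lam" and y: "y \<in> center lam"
    have "a *\<^sub>R x \<in> center lam" "b *\<^sub>R y \<in> center lam" using sub x y by (auto simp: subspace_def)
    thus "lam (a *\<^sub>R x + b *\<^sub>R y) = a *\<^sub>R lam x + b *\<^sub>R lam y"
      using center_lin_add[OF f] center_lin_scale[OF f x] center_lin_scale[OF f y] by simp
  qed
  have D: "center lam = {x. lam (- x) = - lam x}" using center_neg_iff[OF f] by blast
  have E: "\<forall>x. commute lam x (- x) \<longrightarrow> x \<in> center lam" using comm_neg[OF f] D by blast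
  have E2: "center lam = {x. commute lam x (- x)}" using E center_iff by blast
  have A: "\<forall>x. closed (commutant lam x) \<and> convex (commutant lam x) \<and> cone (commutant lam x)
              \<and> orbit lam x \<inter> commutant lam x = {x}"
    using cone_c conv_c orb commutant_closed[OF f] by simp
  show ?thesis
    apply (intro conjI)
    apply (rule A) apply (rule P2) apply (rule cl) apply (rule sub) apply (rule lin)
    apply (rule D) apply (rule E) apply (rule E2) done
qed

end
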